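(* Every pattern in $S_3$ other than $[123]$, namely $[132]$, $[213]$, $[231]$, $[312]$ and $[321]$, admits a bountiful width system.
   Context: For $x=[x_1,\dots,x_N]\in S_N$ and a pattern $\sigma\in S_k$, an instance of $\sigma$ in $x$ is a tuple of positions $P=(P_1<\dots<P_k)$ with $(x_{P_1},\dots,x_{P_k})$ in the same relative order as $(\sigma(1),\dots,\sigma(k))$. A width system for $\sigma$ is a finite sequence of pairs $(a_1,b_1),\dots,(a_m,b_m)$ with $1\le a_l<b_l\le k$; it assigns to each instance $P$ the tuple $w(P)=(P_{b_1}-P_{a_1},\dots,P_{b_m}-P_{a_m})$. An instance is minimal in $x$ if $w(P)$ is lexicographically minimal among all instances of $\sigma$ in $x$, and locally minimal if it is a minimal instance of $\sigma$ in the consecutive segment $[x_{P_1},x_{P_1+1},\dots,x_{P_k}]$. The width system is bountiful if for every $x\in S_N$ (any $N$), every locally minimal instance $P$ and every position $t$ with $P_1<t<P_k$, $t\notin\{P_1,\dots,P_k\}$, either $x_t<x_{P_j}$ for all $j$ with $P_j<t$, or $x_t>x_{P_j}$ for all $j$ with $P_j>t$. $\sigma$ admits a bountiful width system if some width system for $\sigma$ is bountiful. *)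

theory Defs
  imports Main
begin

text \<open>Positions in lists are 0-indexed (widths are differences of positions, so this is
just a uniform shift of the paper's 1-indexed positions).\<close>

definition is_perm :: "nat list \<Rightarrow> bool" where
  "is_perm x \<longleftrightarrow> distinct x \<and> set x = {1..length x}"

definition is_instance :: "nat list \<Rightarrow> nat list \<Rightarrow> nat list \<Rightarrow> bool" where
  "is_instance sigma x P \<longleftrightarrow>
     length P = length sigma \<and> sorted_wrt (<) P \<and> (\<forall>p\<in>set P. p < length x) \<and>
     (\<forall>i<length sigma. \<forall>j<length sigma.
        (x ! (P ! i) < x ! (P ! j)) = (sigma ! i < sigma ! j))"

text \<open>A width system for sigma: pairs (a,b) with 1 \<le> a < b \<le> k (1-indexed pattern positions).\<close>
definition is_width_system :: "nat list \<Rightarrow> (nat \<times> nat) list \<Rightarrow> bool" where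
  "is_width_system sigma ws \<longleftrightarrow>
     (\<forall>(a,b)\<in>set ws. 1 \<le> a \<and> a < b \<and> b \<le> length sigma)"

definition width :: "(nat \<times> nat) list \<Rightarrow> nat list \<Rightarrow> nat list" where
  "width ws P = map (\<lambda>(a,b). P ! (b - 1) - P ! (a - 1)) ws"

definition lex_le :: "nat list \<Rightarrow> nat list \<Rightarrow> bool" where
  "lex_le u v \<longleftrightarrow> u = v \<or>
     (\<exists>i. i < length u \<and> i < length v \<and> take i u = take i v \<and> u ! i < v ! i)"

definition minimal_instance :: "nat list \<Rightarrow> (nat \<times> nat) list \<Rightarrow> nat list \<Rightarrow> nat list \<Rightarrow> bool" where
  "minimal_instance sigma ws x P \<longleftrightarrow>
     is_instance sigma x P \<and>
     (\<forall>Q. is_instance sigma x Q \<longrightarrow> lex_le (width ws P) (width ws Q))"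

text \<open>Locally minimal: P (shifted) is a minimal instance in the consecutive segment
x_{P_1}, ..., x_{P_k}.\<close>
definition locally_minimal :: "nat list \<Rightarrow> (nat \<times> nat) list \<Rightarrow> nat list \<Rightarrow> nat list \<Rightarrow> bool" where
  "locally_minimal sigma ws x P \<longleftrightarrow>
     is_instance sigma x P \<and> P \<noteq> [] \<and>
     minimal_instance sigma ws (take (last P - hd P + 1) (drop (hd P) x))
        (map (\<lambda>p. p - hd P) P)"

definition bountiful :: "nat list \<Rightarrow> (nat \<times> nat) list \<Rightarrow> bool" where
  "bountiful sigma ws \<longleftrightarrow>
     (\<forall>x P t. is_perm x \<longrightarrow> locally_minimal sigma ws x P \<longrightarrow>
        hd P < t \<longrightarrow> t < last P \<longrightarrow> t \<notin> set P \<longrightarrow>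
        ((\<forall>j<length P. P ! j < t \<longrightarrow> x ! t < x ! (P ! j)) \<or>
         (\<forall>j<length P. t < P ! j \<longrightarrow> x ! (P ! j) < x ! t)))"

definition admits_bountiful :: "nat list \<Rightarrow> bool" where
  "admits_bountiful sigma \<longleftrightarrow> (\<exists>ws. is_width_system sigma ws \<and> bountiful sigma ws)"

end

theory Submission
  imports Defs
begin

lemma shift_min:
  assumes lm: "locally_minimal sigma ws x P" and inst: "is_instance sigma x Q"
    and rng: "\<forall>q\<in>set Q. hd P \<le> q \<and> q \<le> last P"
  shows "lex_le (width ws (map (\<lambda>p. p - hd P) P)) (width ws (map (\<lambda>p. p - hd P) Q))"
proof -
  let ?h = "hd P"
  let ?y = "take (last P - hd P + 1) (drop (hd P) x)"
  have ne: "P \<noteq> []" and mi: "minimal_instance sigma ws ?y (map (\<lambda>p. p - hd P) P)"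
    and ip: "is_instance sigma x P"
    using lm unfolding locally_minimal_def by auto
  have lastlt: "last P < length x" using ip ne unfolding is_instance_def by auto
  have yq: "\<And>q. q \<in> set Q \<Longrightarrow> q - ?h < length ?y \<and> ?y ! (q - ?h) = x ! q"
  proof -
    fix q assume q: "q \<in> set Q"
    have a: "?h \<le> q" "q \<le> last P" using rng q by auto
    have l: "q - ?h < length ?y" using a lastlt by simp
    have "?y ! (q - ?h) = drop ?h x ! (q - ?h)" using l by (simp add: nth_take)
    also have "\<dots> = x ! q" using a lastlt by simp
    finally show "q - ?h < length ?y \<and> ?y ! (q - ?h) = x ! q" using l by simp
  qed
  have "is_instance sigma ?y (map (\<lambda>p. p - hd P) Q)"
    unfolding is_instance_def
  proof (intro conjI)
    show "length (map (\<lambda>p. p - hd P) Q) = length sigma" using inst by (simp add: is_instance_def)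
    show "sorted_wrt (<) (map (\<lambda>p. p - hd P) Q)"
      unfolding sorted_wrt_map
    proof (rule sorted_wrt_mono_rel[of Q "(<)"])
      show "sorted_wrt (<) Q" using inst by (simp add: is_instance_def)
      fix a b assume "a \<in> set Q" "b \<in> set Q" "a < b"
      thus "a - hd P < b - hd P" using rng by (meson diff_less_mono)
    qed
    show "\<forall>p\<in>set (map (\<lambda>p. p - hd P) Q). p < length ?y" using yq by auto
    show "\<forall>i<length sigma. \<forall>j<length sigma.
       (?y ! (map (\<lambda>p. p - hd P) Q ! i) < ?y ! (map (\<lambda>p. p - hd P) Q ! j)) = (sigma ! i < sigma ! j)"
    proof (intro allI impI)
      fix i j assume i: "i < length sigma" and j: "j < length sigma"
      have li: "i < length Q" "j < length Q" using i j inst by (auto simp: is_instance_def)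
      hence "Q ! i \<in> set Q" "Q ! j \<in> set Q" by auto
      thus "(?y ! (map (\<lambda>p. p - hd P) Q ! i) < ?y ! (map (\<lambda>p. p - hd P) Q ! j)) = (sigma ! i < sigma ! j)"
        using yq[of "Q ! i"] yq[of "Q ! j"] li inst i j unfolding is_instance_def by simp
    qed
  qed
  thus ?thesis using mi unfolding minimal_instance_def by blast
qed

lemma all3: "(\<forall>i<(3::nat). P i) = (P 0 \<and> P 1 \<and> P 2)"
  by (auto simp: numeral_3_eq_3 numeral_2_eq_2 less_Suc_eq)

lemma all3s: "(\<forall>i<Suc (Suc (Suc 0)). P i) = (P 0 \<and> P 1 \<and> P 2)"
  by (auto simp: numeral_2_eq_2 less_Suc_eq)

lemma ex2: "(\<exists>i<(2::nat). P i) = (P 0 \<or> P 1)"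
  by (auto simp: numeral_2_eq_2 less_Suc_eq)

lemma lex1: "lex_le [u] [v] \<longleftrightarrow> u \<le> v"
  unfolding lex_le_def by auto

lemma lex2: "lex_le [u1,u2] [v1,v2] \<longleftrightarrow> u1 < v1 \<or> (u1 = v1 \<and> u2 \<le> v2)"
  unfolding lex_le_def by (simp add: ex2 less_Suc_eq) (auto)

lemma generic3:
  assumes perm: "is_perm x" and lm: "locally_minimal sigma ws x P" and len: "length sigma = 3"
  obtains p1 p2 p3 where "P = [p1,p2,p3]" "p1 < p2" "p2 < p3" "p3 < length x"
    "is_instance sigma x [p1,p2,p3]"
    "\<And>a b c. is_instance sigma x [a,b,c] \<Longrightarrow> p1 \<le> a \<Longrightarrow> c \<le> p3 \<Longrightarrow>
        lex_le (width ws [0,p2-p1,p3-p1]) (width ws [a-p1,b-p1,c-p1])"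
    "\<And>t u. t < length x \<Longrightarrow> u < length x \<Longrightarrow> t \<noteq> u \<Longrightarrow> x ! t \<noteq> x ! u"
proof -
  have ip: "is_instance sigma x P" using lm by (simp add: locally_minimal_def)
  hence "length P = 3" using len by (simp add: is_instance_def)
  then obtain p1 p2 p3 where P: "P = [p1,p2,p3]"
    by (auto simp: numeral_3_eq_3 length_Suc_conv)
  have o: "p1 < p2" "p2 < p3" "p3 < length x" using ip P by (auto simp: is_instance_def)
  have d: "distinct x" using perm by (simp add: is_perm_def)
  show ?thesis
  proof (rule that[OF P o ip[unfolded P]])
    fix a b c assume i: "is_instance sigma x [a,b,c]" "p1 \<le> a" "c \<le> p3"
    hence "a < b" "b < c" by (auto simp: is_instance_def)
    hence "\<forall>q\<in>set [a,b,c]. hd P \<le> q \<and> q \<le> last P" using i P by auto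
    from shift_min[OF lm i(1) this]
    show "lex_le (width ws [0,p2-p1,p3-p1]) (width ws [a-p1,b-p1,c-p1])" using P by simp
  next
    fix t u assume "t < length x" "u < length x" "t \<noteq> u"
    thus "x ! t \<noteq> x ! u" using d by (simp add: nth_eq_iff_index_eq)
  qed
qed

lemma inst3: "is_instance [s1,s2,s3] x [a,b,c] \<longleftrightarrow> a < b \<and> b < c \<and> c < length x \<and>
   (\<forall>i<3. \<forall>j<3. ((x ! ([a,b,c] ! i) < x ! ([a,b,c] ! j)) = ([s1,s2,s3] ! i < [s1,s2,s3] ! j)))"
  unfolding is_instance_def by auto

lemma b132: "bountiful [1,3,2] [(1,3),(1,2)]"
  unfolding bountiful_def
proof (intro allI impI)
  fix x P t assume perm: "is_perm x" and lm: "locally_minimal [1,3,2] [(1,3),(1,2)] x P"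
    and t: "hd P < t" "t < last P" "t \<notin> set P"
  obtain p1 p2 p3 where P: "P = [p1,p2,p3]" and o: "p1 < p2" "p2 < p3" "p3 < length x"
    and ip: "is_instance [1,3,2] x [p1,p2,p3]"
    and mn: "\<And>a b c. is_instance [1,3,2] x [a,b,c] \<Longrightarrow> p1 \<le> a \<Longrightarrow> c \<le> p3 \<Longrightarrow>
        lex_le (width [(1,3),(1,2)] [0,p2-p1,p3-p1]) (width [(1,3),(1,2)] [a-p1,b-p1,c-p1])"
    and ds: "\<And>t u. t < length x \<Longrightarrow> u < length x \<Longrightarrow> t \<noteq> u \<Longrightarrow> x ! t \<noteq> x ! u"
    using generic3[OF perm lm] by auto
  have v: "x ! p1 < x ! p3" "x ! p3 < x ! p2" using ip by (simp_all add: inst3 all3)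
  have tt: "p1 < t" "t < p3" "t \<noteq> p1" "t \<noteq> p2" "t \<noteq> p3" using t P by auto
  have dt: "x ! t \<noteq> x ! p1" "x ! t \<noteq> x ! p2" "x ! t \<noteq> x ! p3" using ds tt o by auto
  show "(\<forall>j<length P. P ! j < t \<longrightarrow> x ! t < x ! (P ! j)) \<or>
        (\<forall>j<length P. t < P ! j \<longrightarrow> x ! (P ! j) < x ! t)"
  proof (cases "t < p2")
    case True
    show ?thesis
    proof (rule ccontr)
      assume "\<not> ?thesis"
      hence b: "x ! p1 < x ! t" "x ! t < x ! p2" using True v tt dt o unfolding P by (auto simp: all3s)
      show False
      proof (cases "x ! p3 < x ! t")
        case True
        have "is_instance [1,3,2] x [p1,t,p3]" using b True \<open>t < p2\<close> v tt o by (auto simp: inst3 all3)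
        from mn[OF this] show False using \<open>t < p2\<close> tt o by (auto simp: width_def lex2)
      next
        case False
        have "is_instance [1,3,2] x [t,p2,p3]" using b False \<open>t < p2\<close> v tt dt o by (auto simp: inst3 all3)
        from mn[OF this] show False using \<open>t < p2\<close> tt o by (auto simp: width_def lex2)
      qed
    qed
  next
    case False
    hence tp: "p2 < t" using tt by auto
    show ?thesis
    proof (rule ccontr)
      assume "\<not> ?thesis"
      hence b: "x ! p1 < x ! t" "x ! t < x ! p3" using tp v tt dt o unfolding P by (auto simp: all3s)
      have "is_instance [1,3,2] x [p1,p2,t]" using b tp v tt o by (auto simp: inst3 all3)
      from mn[OF this] show False using tp tt o by (auto simp: width_def lex2)
    qed
  qed
qed


lemma b213: "bountiful [2,1,3] [(1,3),(2,3)]"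
  unfolding bountiful_def
proof (intro allI impI)
  fix x P t assume perm: "is_perm x" and lm: "locally_minimal [2,1,3] [(1,3),(2,3)] x P"
    and t: "hd P < t" "t < last P" "t \<notin> set P"
  obtain p1 p2 p3 where P: "P = [p1,p2,p3]" and o: "p1 < p2" "p2 < p3" "p3 < length x"
    and ip: "is_instance [2,1,3] x [p1,p2,p3]"
    and mn: "\<And>a b c. is_instance [2,1,3] x [a,b,c] \<Longrightarrow> p1 \<le> a \<Longrightarrow> c \<le> p3 \<Longrightarrow>
        lex_le (width [(1,3),(2,3)] [0,p2-p1,p3-p1]) (width [(1,3),(2,3)] [a-p1,b-p1,c-p1])"
    and ds: "\<And>t u. t < length x \<Longrightarrow> u < length x \<Longrightarrow> t \<noteq> u \<Longrightarrow> x ! t \<noteq> x ! u"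
    using generic3[OF perm lm] by auto
  have v: "x ! p2 < x ! p1" "x ! p1 < x ! p3" using ip by (simp_all add: inst3 all3)
  have tt: "p1 < t" "t < p3" "t \<noteq> p1" "t \<noteq> p2" "t \<noteq> p3" using t P by auto
  have dt: "x ! t \<noteq> x ! p1" "x ! t \<noteq> x ! p2" "x ! t \<noteq> x ! p3" using ds tt o by auto
  show "(\<forall>j<length P. P ! j < t \<longrightarrow> x ! t < x ! (P ! j)) \<or>
        (\<forall>j<length P. t < P ! j \<longrightarrow> x ! (P ! j) < x ! t)"
  proof (cases "t < p2")
    case True
    hence tp: "t < p2" .
    show ?thesis
    proof (rule ccontr)
      assume "\<not> ?thesis"
      hence b: "x ! p1 < x ! t" "x ! t < x ! p3" using tp v tt dt o unfolding P by (auto simp: all3s)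
      have "is_instance [2,1,3] x [t,p2,p3]" using b tp v tt dt o by (auto simp: inst3 all3)
        from mn[OF this] show False using tp tt o by (auto simp: width_def lex1 lex2)
    qed
  next
    case False
    hence tp: "p2 < t" using tt by auto
    show ?thesis
    proof (rule ccontr)
      assume "\<not> ?thesis"
      hence b: "x ! p2 < x ! t" "x ! t < x ! p3" using tp v tt dt o unfolding P by (auto simp: all3s)
      show False
      proof (cases "x ! p1 < x ! t")
        case True
        have "is_instance [2,1,3] x [p1,p2,t]" using b True tp v tt dt o by (auto simp: inst3 all3)
        from mn[OF this] show False using tp tt o by (auto simp: width_def lex1 lex2)
      next
        case False
        have "is_instance [2,1,3] x [p1,t,p3]" using b False tp v tt dt o by (auto simp: inst3 all3)
        from mn[OF this] show False using tp tt o by (auto simp: width_def lex1 lex2)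
      qed
    qed
  qed
qed

lemma b231: "bountiful [2,3,1] [(1,3)]"
  unfolding bountiful_def
proof (intro allI impI)
  fix x P t assume perm: "is_perm x" and lm: "locally_minimal [2,3,1] [(1,3)] x P"
    and t: "hd P < t" "t < last P" "t \<notin> set P"
  obtain p1 p2 p3 where P: "P = [p1,p2,p3]" and o: "p1 < p2" "p2 < p3" "p3 < length x"
    and ip: "is_instance [2,3,1] x [p1,p2,p3]"
    and mn: "\<And>a b c. is_instance [2,3,1] x [a,b,c] \<Longrightarrow> p1 \<le> a \<Longrightarrow> c \<le> p3 \<Longrightarrow>
        lex_le (width [(1,3)] [0,p2-p1,p3-p1]) (width [(1,3)] [a-p1,b-p1,c-p1])"
    and ds: "\<And>t u. t < length x \<Longrightarrow> u < length x \<Longrightarrow> t \<noteq> u \<Longrightarrow> x ! t \<noteq> x ! u"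
    using generic3[OF perm lm] by auto
  have v: "x ! p3 < x ! p1" "x ! p1 < x ! p2" using ip by (simp_all add: inst3 all3)
  have tt: "p1 < t" "t < p3" "t \<noteq> p1" "t \<noteq> p2" "t \<noteq> p3" using t P by auto
  have dt: "x ! t \<noteq> x ! p1" "x ! t \<noteq> x ! p2" "x ! t \<noteq> x ! p3" using ds tt o by auto
  show "(\<forall>j<length P. P ! j < t \<longrightarrow> x ! t < x ! (P ! j)) \<or>
        (\<forall>j<length P. t < P ! j \<longrightarrow> x ! (P ! j) < x ! t)"
  proof (cases "t < p2")
    case True
    hence tp: "t < p2" .
    show ?thesis
    proof (rule ccontr)
      assume "\<not> ?thesis"
      hence b: "x ! p1 < x ! t" "x ! t < x ! p2" using tp v tt dt o unfolding P by (auto simp: all3s)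
      have "is_instance [2,3,1] x [t,p2,p3]" using b tp v tt dt o by (auto simp: inst3 all3)
        from mn[OF this] show False using tp tt o by (auto simp: width_def lex1 lex2)
    qed
  next
    case False
    hence tp: "p2 < t" using tt by auto
    show ?thesis using tp v tt dt o unfolding P by (auto simp: all3s)
  qed
qed

lemma b312: "bountiful [3,1,2] [(1,3)]"
  unfolding bountiful_def
proof (intro allI impI)
  fix x P t assume perm: "is_perm x" and lm: "locally_minimal [3,1,2] [(1,3)] x P"
    and t: "hd P < t" "t < last P" "t \<notin> set P"
  obtain p1 p2 p3 where P: "P = [p1,p2,p3]" and o: "p1 < p2" "p2 < p3" "p3 < length x"
    and ip: "is_instance [3,1,2] x [p1,p2,p3]"
    and mn: "\<And>a b c. is_instance [3,1,2] x [a,b,c] \<Longrightarrow> p1 \<le> a \<Longrightarrow> c \<le> p3 \<Longrightarrow>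
        lex_le (width [(1,3)] [0,p2-p1,p3-p1]) (width [(1,3)] [a-p1,b-p1,c-p1])"
    and ds: "\<And>t u. t < length x \<Longrightarrow> u < length x \<Longrightarrow> t \<noteq> u \<Longrightarrow> x ! t \<noteq> x ! u"
    using generic3[OF perm lm] by auto
  have v: "x ! p2 < x ! p3" "x ! p3 < x ! p1" using ip by (simp_all add: inst3 all3)
  have tt: "p1 < t" "t < p3" "t \<noteq> p1" "t \<noteq> p2" "t \<noteq> p3" using t P by auto
  have dt: "x ! t \<noteq> x ! p1" "x ! t \<noteq> x ! p2" "x ! t \<noteq> x ! p3" using ds tt o by auto
  show "(\<forall>j<length P. P ! j < t \<longrightarrow> x ! t < x ! (P ! j)) \<or>
        (\<forall>j<length P. t < P ! j \<longrightarrow> x ! (P ! j) < x ! t)"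
  proof (cases "t < p2")
    case True
    hence tp: "t < p2" .
    show ?thesis using tp v tt dt o unfolding P by (auto simp: all3s)
  next
    case False
    hence tp: "p2 < t" using tt by auto
    show ?thesis
    proof (rule ccontr)
      assume "\<not> ?thesis"
      hence b: "x ! p2 < x ! t" "x ! t < x ! p3" using tp v tt dt o unfolding P by (auto simp: all3s)
      have "is_instance [3,1,2] x [p1,p2,t]" using b tp v tt dt o by (auto simp: inst3 all3)
        from mn[OF this] show False using tp tt o by (auto simp: width_def lex1 lex2)
    qed
  qed
qed

lemma b321: "bountiful [3,2,1] []"
  unfolding bountiful_def
proof (intro allI impI)
  fix x P t assume perm: "is_perm x" and lm: "locally_minimal [3,2,1] [] x P"
    and t: "hd P < t" "t < last P" "t \<notin> set P"
  obtain p1 p2 p3 where P: "P = [p1,p2,p3]" and o: "p1 < p2" "p2 < p3" "p3 < length x"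
    and ip: "is_instance [3,2,1] x [p1,p2,p3]"
    and mn: "\<And>a b c. is_instance [3,2,1] x [a,b,c] \<Longrightarrow> p1 \<le> a \<Longrightarrow> c \<le> p3 \<Longrightarrow>
        lex_le (width [] [0,p2-p1,p3-p1]) (width [] [a-p1,b-p1,c-p1])"
    and ds: "\<And>t u. t < length x \<Longrightarrow> u < length x \<Longrightarrow> t \<noteq> u \<Longrightarrow> x ! t \<noteq> x ! u"
    using generic3[OF perm lm] by auto
  have v: "x ! p3 < x ! p2" "x ! p2 < x ! p1" using ip by (simp_all add: inst3 all3)
  have tt: "p1 < t" "t < p3" "t \<noteq> p1" "t \<noteq> p2" "t \<noteq> p3" using t P by auto
  have dt: "x ! t \<noteq> x ! p1" "x ! t \<noteq> x ! p2" "x ! t \<noteq> x ! p3" using ds tt o by auto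
  show "(\<forall>j<length P. P ! j < t \<longrightarrow> x ! t < x ! (P ! j)) \<or>
        (\<forall>j<length P. t < P ! j \<longrightarrow> x ! (P ! j) < x ! t)"
  proof (cases "t < p2")
    case True
    hence tp: "t < p2" .
    show ?thesis using tp v tt dt o unfolding P by (auto simp: all3s)
  next
    case False
    hence tp: "p2 < t" using tt by auto
    show ?thesis using tp v tt dt o unfolding P by (auto simp: all3s)
  qed
qed

theorem mainTheorem15:
  shows "\<forall>sigma \<in> {[1,3,2], [2,1,3], [2,3,1], [3,1,2], [3,2,1]}. admits_bountiful sigma"
  unfolding admits_bountiful_def is_width_system_def
proof (intro ballI)
  fix sigma :: "nat list" assume "sigma \<in> {[1,3,2], [2,1,3], [2,3,1], [3,1,2], [3,2,1]}"
  thus "\<exists>ws. (\<forall>(a, b)\<in>set ws. 1 \<le> a \<and> a < b \<and> b \<le> length sigma) \<and> bountiful sigma ws"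
  proof (elim insertE emptyE)
    assume "sigma = [1,3,2]" thus ?thesis using b132 by (intro exI[of _ "[(1,3),(1,2)]"]) auto
  next
    assume "sigma = [2,1,3]" thus ?thesis using b213 by (intro exI[of _ "[(1,3),(2,3)]"]) auto
  next
    assume "sigma = [2,3,1]" thus ?thesis using b231 by (intro exI[of _ "[(1,3)]"]) auto
  next
    assume "sigma = [3,1,2]" thus ?thesis using b312 by (intro exI[of _ "[(1,3)]"]) auto
  next
    assume "sigma = [3,2,1]" thus ?thesis using b321 by (intro exI[of _ "[]"]) auto
  qed
qed

end
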